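(* Let $e>1$ be odd, $t\ge0$ an integer, $\mathbf c=(t+(1-e)/2,0)$ and $\mu=(\mu^1,\mu^2)$ a bipartition. Then the partition associated to the $1$-runner abacus $\mathfrak A_e(\mu,\mathbf c)=\{2j+e: j\in\mathfrak B(\mu,\mathbf c)^1\}\cup\{2j: j\in\mathfrak B(\mu,\mathbf c)^2\}$ equals $\Phi_t(\mu)$.
   Context: A $1$-runner abacus is a subset $\mathfrak A\subseteq\mathbb Z$ such that for some $n\ge1$, $-j\in\mathfrak A$ and $j\notin\mathfrak A$ for all $j\ge n$. List its elements $a_1>a_2>\cdots$; holes are elements of $\mathbb Z\setminus\mathfrak A$; $\lambda_j$ is the number of holes less than $a_j$, and $(\lambda_1,\lambda_2,\dots)$ is the partition associated to $\mathfrak A$; its charge is $a_1-\lambda_1$. For a bipartition $\mu$ and $\mathbf c=(c_1,c_2)\in\mathbb Z^2$ the symbol is $\mathfrak B(\mu,\mathbf c)=(\mathfrak B^1,\mathfrak B^2)$ with $\mathfrak B^i=\{\mu^i_j-j+c_i+1: j\ge1\}$ (parts $\mu^i_j=0$ beyond the length). $\Delta_t=(t,t-1,\dots,1)$. $2$-quotient convention: for a partition $\lambda$ take a $\beta$-set $B$ of $\lambda$ (the set $\{\lambda_i+N-i:1\le i\le N\}$, $N$ at least the number of parts) with $|B|$ odd, put $B^0=\{x/2:x\in B\text{ even}\}$, $B^1=\{(x-1)/2: x\in B\text{ odd}\}$, and $\lambda^{(2)}=(\text{partition with }\beta\text{-set }B^0,\ \text{partition with }\beta\text{-set }B^1)$.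 For $\lambda$ with $2$-core $\Delta_t$ and $\lambda^{(2)}=(\nu^1,\nu^2)$, $\bar\lambda^{(2)}=(\nu^1,\nu^2)$ if $t$ is even and $(\nu^2,\nu^1)$ if $t$ is odd. $\Phi_t(\mu)$ is the unique partition $\lambda$ with $2$-core $\Delta_t$ and $\bar\lambda^{(2)}=\mu$. *)

theory Defs
  imports Main
begin

definition is_partition :: "nat list \<Rightarrow> bool" where
  "is_partition lam \<longleftrightarrow> sorted_wrt (\<ge>) lam \<and> 0 \<notin> set lam"

definition part :: "nat list \<Rightarrow> nat \<Rightarrow> nat" where
  "part lam j = (if 1 \<le> j \<and> j \<le> length lam then lam ! (j - 1) else 0)"

definition is_bipartition :: "nat list \<times> nat list \<Rightarrow> bool" where
  "is_bipartition mu \<longleftrightarrow> is_partition (fst mu) \<and> is_partition (snd mu)"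

definition is_abacus :: "int set \<Rightarrow> bool" where
  "is_abacus A \<longleftrightarrow> (\<exists>n::int\<ge>1. \<forall>j\<ge>n. -j \<in> A \<and> j \<notin> A)"

definition abacus_elem :: "int set \<Rightarrow> nat \<Rightarrow> int" where
  "abacus_elem A j = (THE a. a \<in> A \<and> card {b \<in> A. a < b} = j - 1)"

definition abacus_part :: "int set \<Rightarrow> nat \<Rightarrow> nat" where
  "abacus_part A j = card {h. h \<notin> A \<and> h < abacus_elem A j}"

definition symbol_comp :: "nat list \<Rightarrow> int \<Rightarrow> int set" where
  "symbol_comp nu c = {int (part nu j) - int j + c + 1 | j. j \<ge> 1}"

definition symbol :: "nat list \<times> nat list \<Rightarrow> int \<times> int \<Rightarrow> int set \<times> int set" where
  "symbol mu c = (symbol_comp (fst mu) (fst c), symbol_comp (snd mu) (snd c))"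

definition abacus_e :: "int \<Rightarrow> nat list \<times> nat list \<Rightarrow> int \<times> int \<Rightarrow> int set" where
  "abacus_e e mu c =
     {2 * j + e | j. j \<in> fst (symbol mu c)} \<union> {2 * j | j. j \<in> snd (symbol mu c)}"

definition beta :: "nat \<Rightarrow> nat list \<Rightarrow> nat set" where
  "beta N lam = {part lam i + N - i | i. 1 \<le> i \<and> i \<le> N}"

definition staircase :: "nat \<Rightarrow> nat list" where
  "staircase t = rev [1..<t+1]"

text \<open>Removal of a rim 2-hook (domino) from lam giving kappa, expressed on
  beta-sets: some bead x is moved to the free position x-2.\<close>
definition remove_domino :: "nat list \<Rightarrow> nat list \<Rightarrow> bool" where
  "remove_domino lam kappa \<longleftrightarrow> is_partition lam \<and> is_partition kappa \<and>
     (\<exists>N. length lam \<le> N \<and> length kappa \<le> N \<and>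
        (\<exists>x \<in> beta N lam. 2 \<le> x \<and> x - 2 \<notin> beta N lam \<and>
           beta N kappa = insert (x - 2) (beta N lam - {x})))"

definition has_2core :: "nat list \<Rightarrow> nat list \<Rightarrow> bool" where
  "has_2core lam kappa \<longleftrightarrow> remove_domino\<^sup>*\<^sup>* lam kappa \<and> (\<nexists>k. remove_domino kappa k)"

definition partition_of_beta :: "nat set \<Rightarrow> nat list" where
  "partition_of_beta S =
     (THE nu. is_partition nu \<and> length nu \<le> card S \<and> beta (card S) nu = S)"

definition quot2 :: "nat list \<Rightarrow> nat list \<times> nat list" where
  "quot2 lam = (let B = beta (2 * length lam + 1) lam in
     (partition_of_beta {x div 2 | x. x \<in> B \<and> even x},
      partition_of_beta {(x - 1) div 2 | x. x \<in> B \<and> odd x}))"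

definition quot2_bar :: "nat \<Rightarrow> nat list \<Rightarrow> nat list \<times> nat list" where
  "quot2_bar t lam = (if even t then quot2 lam else prod.swap (quot2 lam))"

definition Phi :: "nat \<Rightarrow> nat list \<times> nat list \<Rightarrow> nat list" where
  "Phi t mu = (THE lam. is_partition lam \<and> has_2core lam (staircase t) \<and> quot2_bar t lam = mu)"

end

theory Submission
  imports Defs
begin


definition Ab :: "nat list \<Rightarrow> int \<Rightarrow> int set" where
  "Ab nu c = {int (part nu i) - int i + c | i. i \<ge> 1}"

lemma part_zero: "length l < i \<Longrightarrow> part l i = 0"
  by (simp add: part_def)

lemma part_mono:
  assumes "is_partition l" "1 \<le> i" "i \<le> j"
  shows "part l j \<le> part l i"
proof (cases "j \<le> length l")
  case True
  have s: "sorted_wrt (\<ge>) l" using assms(1) by (simp add: is_partition_def)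
  show ?thesis
  proof (cases "i = j")
    case False
    then have "i - 1 < j - 1" using assms by auto
    then have "l ! (j-1) \<le> l ! (i-1)" using s True sorted_wrt_nth_less[OF s] by auto
    then show ?thesis using True assms by (simp add: part_def)
  qed simp
qed (simp add: part_def)

lemma part_pos:
  assumes "is_partition l" "1 \<le> i" "i \<le> length l"
  shows "part l i > 0"
proof -
  have "l ! (i-1) \<in> set l" using assms by auto
  then have "l ! (i-1) \<noteq> 0" using assms(1) unfolding is_partition_def by metis
  then show ?thesis using assms by (simp add: part_def)
qed

lemma part_ext:
  assumes "is_partition a" "is_partition b" "\<forall>j\<ge>1. part a j = part b j"
  shows "a = b"
proof -
  have "\<not> length a < length b"
  proof
    assume h: "length a < length b"
    then have "part b (length b) > 0" using part_pos[OF assms(2)] by simp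
    moreover have "part a (length b) = 0" using h part_zero by simp
    ultimately show False using assms(3) h by (metis less_nat_zero_code not_less_zero le_add1 One_nat_def Suc_leI gr0I)
  qed
  moreover have "\<not> length b < length a"
  proof
    assume h: "length b < length a"
    then have "part a (length a) > 0" using part_pos[OF assms(1)] by simp
    moreover have "part b (length a) = 0" using h part_zero by simp
    ultimately show False using assms(3) h by (metis less_nat_zero_code not_less_zero le_add1 One_nat_def Suc_leI gr0I)
  qed
  ultimately have L: "length a = length b" by simp
  show ?thesis
  proof (rule nth_equalityI[OF L])
    fix i assume "i < length a"
    then have "part a (i+1) = a ! i" "part b (i+1) = b ! i" using L by (auto simp: part_def)
    then show "a ! i = b ! i" using assms(3) by (metis le_add2)
  qed
qed

definition aseq :: "nat list \<Rightarrow> int \<Rightarrow> nat \<Rightarrow> int" where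
  "aseq nu c i = int (part nu i) - int i + c"

lemma Ab_aseq: "Ab nu c = aseq nu c ` {1..}"
  by (auto simp: Ab_def aseq_def)

lemma aseq_strict:
  assumes "is_partition nu" "1 \<le> i" "i < j"
  shows "aseq nu c j < aseq nu c i"
  using part_mono[OF assms(1,2), of j] assms by (simp add: aseq_def)

lemma aseq_le:
  assumes "is_partition nu" "1 \<le> i" "i \<le> j"
  shows "aseq nu c j \<le> aseq nu c i"
  using aseq_strict[OF assms(1,2)] assms(3) by (cases "i = j") (auto intro: less_imp_le)

lemma aseq_less_iff:
  assumes "is_partition nu" "1 \<le> i" "1 \<le> j"
  shows "aseq nu c j < aseq nu c i \<longleftrightarrow> i < j"
  using aseq_strict[OF assms(1,2)] aseq_le[OF assms(1,3)] by (meson leI not_le)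

lemma aseq_inj:
  assumes "is_partition nu" "1 \<le> i" "1 \<le> j" "aseq nu c i = aseq nu c j"
  shows "i = j"
  using aseq_less_iff[OF assms(1,2,3)] aseq_less_iff[OF assms(1,3,2)] assms(4) by (metis linorder_neqE_nat less_irrefl)

lemma aseq_inj_on: "is_partition nu \<Longrightarrow> inj_on (aseq nu c) {1..}"
  by (auto intro!: inj_onI dest: aseq_inj)

lemma aseq_big: "length nu < i \<Longrightarrow> aseq nu c i = c - int i"
  by (simp add: aseq_def part_zero)

lemma aseq_ge: "aseq nu c i \<ge> c - int i"
  by (simp add: aseq_def)

lemma above_set:
  assumes "is_partition nu" "1 \<le> j"
  shows "{b \<in> Ab nu c. aseq nu c j < b} = aseq nu c ` {1..<j}"
  using assms aseq_less_iff[OF assms(1) _ assms(2)] unfolding Ab_aseq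
  by (auto simp: image_iff)

lemma abacus_elem_Ab:
  assumes "is_partition nu" "1 \<le> j"
  shows "abacus_elem (Ab nu c) j = aseq nu c j"
  unfolding abacus_elem_def
proof (rule the_equality)
  have "inj_on (aseq nu c) {1..<j}" by (rule inj_on_subset[OF aseq_inj_on[OF assms(1)]]) auto
  then have "card (aseq nu c ` {1..<j}) = j - 1" by (simp add: card_image)
  then show "aseq nu c j \<in> Ab nu c \<and> card {b \<in> Ab nu c. aseq nu c j < b} = j - 1"
    using above_set[OF assms] assms(2) by (auto simp: Ab_aseq)
next
  fix a assume a: "a \<in> Ab nu c \<and> card {b \<in> Ab nu c. a < b} = j - 1"
  then obtain i where i: "i \<ge> 1" "a = aseq nu c i" by (auto simp: Ab_aseq)
  have "inj_on (aseq nu c) {1..<i}" by (rule inj_on_subset[OF aseq_inj_on[OF assms(1)]]) auto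
  then have "card (aseq nu c ` {1..<i}) = i - 1" by (simp add: card_image)
  then have "i - 1 = j - 1" using a above_set[OF assms(1) i(1)] i by simp
  then have "i = j" using i(1) assms(2) by linarith
  then show "a = aseq nu c j" using i by simp
qed

lemma abacus_part_Ab:
  assumes "is_partition nu" "1 \<le> j"
  shows "abacus_part (Ab nu c) j = part nu j"
proof -
  define M where "M = max (length nu) j"
  define a where "a = aseq nu c"
  have H: "{h. h \<notin> Ab nu c \<and> h < a j} = {c - int M ..< a j} - a ` {j<..M}"
  proof (intro equalityI subsetI)
    fix h assume h: "h \<in> {h. h \<notin> Ab nu c \<and> h < a j}"
    have "h \<ge> c - int M"
    proof (rule ccontr)
      assume "\<not> h \<ge> c - int M"
      then have "nat (c - h) > M" by simp
      then have "a (nat (c - h)) = h" "nat (c-h) \<ge> 1" using aseq_big[of nu "nat (c-h)" c] unfolding a_def M_def by auto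
      then show False using h unfolding Ab_aseq a_def by force
    qed
    moreover have "h \<notin> a ` {j<..M}" using h unfolding Ab_aseq a_def using assms(2) by auto
    ultimately show "h \<in> {c - int M ..< a j} - a ` {j<..M}" using h by auto
  next
    fix h assume h: "h \<in> {c - int M ..< a j} - a ` {j<..M}"
    have "h \<notin> Ab nu c"
    proof
      assume "h \<in> Ab nu c"
      then obtain i where i: "i \<ge> 1" "h = a i" unfolding Ab_aseq a_def by auto
      have "j < i" using h i aseq_less_iff[OF assms(1) assms(2) i(1)] unfolding a_def by auto
      moreover have "i \<le> M"
      proof (rule ccontr)
        assume "\<not> i \<le> M"
        then have "a i = c - int i" using aseq_big unfolding a_def M_def by auto
        then show False using h i \<open>\<not> i \<le> M\<close> by auto
      qed
      ultimately show False using h i by auto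
    qed
    then show "h \<in> {h. h \<notin> Ab nu c \<and> h < a j}" using h by auto
  qed
  have sub: "a ` {j<..M} \<subseteq> {c - int M ..< a j}"
  proof
    fix x assume "x \<in> a ` {j<..M}"
    then obtain i where i: "j < i" "i \<le> M" "x = a i" by auto
    have "a i \<ge> c - int i" unfolding a_def by (rule aseq_ge)
    moreover have "a i < a j" using aseq_strict[OF assms(1,2) i(1)] unfolding a_def .
    ultimately show "x \<in> {c - int M ..< a j}" using i by auto
  qed
  have "inj_on a {j<..M}" unfolding a_def by (rule inj_on_subset[OF aseq_inj_on[OF assms(1)]]) (use assms(2) in auto)
  then have ci: "card (a ` {j<..M}) = M - j" by (simp add: card_image)
  have "abacus_part (Ab nu c) j = card ({c - int M ..< a j} - a ` {j<..M})"
    unfolding abacus_part_def abacus_elem_Ab[OF assms] a_def[symmetric] H ..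
  also have "\<dots> = nat (a j - (c - int M)) - (M - j)"
    using sub ci by (simp add: card_Diff_subset finite_subset)
  also have "\<dots> = part nu j" unfolding a_def aseq_def M_def by auto
  finally show ?thesis .
qed

lemma Ab_inj:
  assumes "is_partition nu" "is_partition nu'" "Ab nu c = Ab nu' c'"
  shows "nu = nu' \<and> c = c'"
proof -
  have "\<forall>j\<ge>1. part nu j = part nu' j" using abacus_part_Ab assms by metis
  then have e: "nu = nu'" using part_ext assms by blast
  have "aseq nu c 1 = aseq nu' c' 1" using abacus_elem_Ab[of _ 1] assms by (metis order_refl)
  then show ?thesis using e by (simp add: aseq_def)
qed



lemma aseq_shift: "aseq nu c i = aseq nu 0 i + c"
  by (simp add: aseq_def)

lemma Ab_tail:
  assumes "w < c - int (length nu)"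
  shows "w \<in> Ab nu c"
proof -
  have "length nu < nat (c - w)" "1 \<le> nat (c - w)" using assms by auto
  then have "aseq nu c (nat (c - w)) = w" using aseq_big[of nu "nat (c-w)" c] assms by simp
  then show ?thesis unfolding Ab_aseq using \<open>1 \<le> nat (c - w)\<close> by force
qed

lemma Ab_cnt_set:
  assumes "int (length nu) \<le> M + c"
  shows "{w \<in> Ab nu c. w \<ge> -M} = aseq nu c ` {1..nat (M + c)}"
proof (intro equalityI subsetI)
  fix w assume w: "w \<in> {w \<in> Ab nu c. w \<ge> -M}"
  then obtain i where i: "i \<ge> 1" "w = aseq nu c i" unfolding Ab_aseq by auto
  have "i \<le> nat (M + c)"
  proof (rule ccontr)
    assume "\<not> i \<le> nat (M + c)"
    then have "length nu < i" "int i > M + c" using assms by auto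
    then show False using aseq_big[of nu i c] w i by auto
  qed
  then show "w \<in> aseq nu c ` {1..nat (M + c)}" using i by auto
next
  fix w assume "w \<in> aseq nu c ` {1..nat (M + c)}"
  then obtain i where i: "1 \<le> i" "i \<le> nat (M + c)" "w = aseq nu c i" by auto
  have "w \<ge> -M" using aseq_ge[where nu=nu and c=c and i=i] i by auto
  then show "w \<in> {w \<in> Ab nu c. w \<ge> -M}" using i unfolding Ab_aseq by auto
qed

lemma Ab_cnt:
  assumes "is_partition nu" "int (length nu) \<le> M + c"
  shows "card {w \<in> Ab nu c. w \<ge> -M} = nat (M + c)" "finite {w \<in> Ab nu c. w \<ge> -M}"
proof -
  have "inj_on (aseq nu c) {1..nat (M + c)}" by (rule inj_on_subset[OF aseq_inj_on[OF assms(1)]]) auto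
  then show "card {w \<in> Ab nu c. w \<ge> -M} = nat (M + c)"
    unfolding Ab_cnt_set[OF assms(2)] by (simp add: card_image)
  show "finite {w \<in> Ab nu c. w \<ge> -M}" unfolding Ab_cnt_set[OF assms(2)] by simp
qed

lemma ZB:
  assumes "length lam \<le> N"
  shows "Ab lam 0 = (\<lambda>x. int x - int N) ` beta N lam \<union> {z. z < - int N}"
proof (intro equalityI subsetI)
  fix z assume "z \<in> Ab lam 0"
  then obtain i where i: "i \<ge> 1" "z = int (part lam i) - int i" unfolding Ab_def by auto
  show "z \<in> (\<lambda>x. int x - int N) ` beta N lam \<union> {z. z < - int N}"
  proof (cases "i \<le> N")
    case True
    then have "part lam i + N - i \<in> beta N lam" using i unfolding beta_def by auto
    moreover have "int (part lam i + N - i) - int N = z" using True i by auto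
    ultimately show ?thesis by force
  next
    case False
    then have "part lam i = 0" using assms part_zero by auto
    then show ?thesis using i False by auto
  qed
next
  fix z assume z: "z \<in> (\<lambda>x. int x - int N) ` beta N lam \<union> {z. z < - int N}"
  show "z \<in> Ab lam 0"
  proof (cases "z < - int N")
    case True
    then show ?thesis using Ab_tail[of z 0 lam] assms by auto
  next
    case False
    then obtain i where i: "1 \<le> i" "i \<le> N" "z = int (part lam i + N - i) - int N"
      using z unfolding beta_def by auto
    then have "z = int (part lam i) - int i + 0" by auto
    then show ?thesis using i unfolding Ab_def by blast
  qed
qed

lemma beta_inj:
  assumes "is_partition a" "is_partition b" "length a \<le> N" "length b \<le> N" "beta N a = beta N b"
  shows "a = b"
  using Ab_inj[OF assms(1,2)] ZB[OF assms(3)] ZB[OF assms(4)] assms(5) by metis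

lemma beta_Suc:
  assumes "part nu 1 = d" "\<forall>i\<ge>1. part nu (Suc i) = part nu' i"
  shows "beta (Suc n) nu = insert (d + n) (beta n nu')"
proof (intro equalityI subsetI)
  fix x assume "x \<in> beta (Suc n) nu"
  then obtain i where i: "1 \<le> i" "i \<le> Suc n" "x = part nu i + Suc n - i" unfolding beta_def by auto
  show "x \<in> insert (d + n) (beta n nu')"
  proof (cases "i = 1")
    case True then show ?thesis using i assms by auto
  next
    case False
    then obtain k where k: "i = Suc k" "1 \<le> k" "k \<le> n" using i by (cases i) auto
    then have "x = part nu' k + n - k" using i assms by auto
    then show ?thesis using k unfolding beta_def by auto
  qed
next
  fix x assume "x \<in> insert (d + n) (beta n nu')"
  then show "x \<in> beta (Suc n) nu"
  proof
    assume "x = d + n"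
    then have "x = part nu 1 + Suc n - 1" using assms by simp
    then show ?thesis unfolding beta_def by force
  next
    assume "x \<in> beta n nu'"
    then obtain k where k: "1 \<le> k" "k \<le> n" "x = part nu' k + n - k" unfolding beta_def by auto
    then have "x = part nu (Suc k) + Suc n - Suc k" using assms by auto
    then show ?thesis using k unfolding beta_def by force
  qed
qed

lemma beta_elem_bound:
  assumes "1 \<le> i" "i \<le> n"
  shows "part nu i + n - i \<in> beta n nu"
  using assms unfolding beta_def by auto

lemma exists_beta:
  "finite S \<Longrightarrow> card S = n \<Longrightarrow> \<exists>nu. is_partition nu \<and> length nu \<le> n \<and> beta n nu = S"
proof (induction n arbitrary: S)
  case 0
  then have "S = {}" by auto
  moreover have "is_partition []" by (simp add: is_partition_def)
  moreover have "beta 0 [] = {}" by (simp add: beta_def)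
  ultimately show ?case by auto
next
  case (Suc n)
  have ne: "S \<noteq> {}" using Suc.prems by auto
  define m where "m = Max S"
  have mS: "m \<in> S" using ne Suc.prems m_def by simp
  have ltm: "\<And>x. x \<in> S - {m} \<Longrightarrow> x < m" proof -
    fix x assume "x \<in> S - {m}"
    then have "x \<le> m" "x \<noteq> m" using Max_ge[OF Suc.prems(1)] m_def by auto
    then show "x < m" by simp
  qed
  have cS': "card (S - {m}) = n" using Suc.prems mS by simp
  obtain nu' where nu': "is_partition nu'" "length nu' \<le> n" "beta n nu' = S - {m}"
    using Suc.IH[OF _ cS'] Suc.prems(1) by blast
  have "S \<subseteq> {0..m}" using Max_ge[OF Suc.prems(1)] m_def by auto
  then have "card S \<le> Suc m" using card_mono[of "{0..m}" S] by simp
  then have mn: "n \<le> m" using Suc.prems by simp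
  have hd: "nu' \<noteq> [] \<Longrightarrow> part nu' 1 \<le> m - n"
  proof -
    assume "nu' \<noteq> []"
    then have "1 \<le> n" using nu'(2) by (cases nu') auto
    then have "part nu' 1 + n - 1 \<in> S - {m}" using beta_elem_bound[of 1 n nu'] nu'(3) by auto
    then have "part nu' 1 + n - 1 < m" using ltm by blast
    then show ?thesis using \<open>1 \<le> n\<close> by linarith
  qed
  show ?case
  proof (cases "m = n")
    case True
    have "nu' = []"
    proof (rule ccontr)
      assume "nu' \<noteq> []"
      then have "part nu' 1 > 0" using part_pos[OF nu'(1), of 1] by (cases nu') auto
      then show False using hd \<open>nu' \<noteq> []\<close> True by simp
    qed
    have "beta (Suc n) [] = insert (0 + n) (beta n [])"
      by (rule beta_Suc) (auto simp: part_def)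
    then have "beta (Suc n) [] = S" using nu' \<open>nu' = []\<close> True mS by auto
    then show ?thesis using \<open>nu' = []\<close> nu' by auto
  next
    case False
    define nu where "nu = (m - n) # nu'"
    have "beta (Suc n) nu = insert (m - n + n) (beta n nu')"
      by (rule beta_Suc) (auto simp: part_def nu_def)
    then have b: "beta (Suc n) nu = S" using nu' mn mS by auto
    have "\<forall>x\<in>set nu'. x \<le> m - n"
    proof
      fix x assume x: "x \<in> set nu'"
      then obtain k where k: "k < length nu'" "x = nu' ! k" by (auto simp: in_set_conv_nth)
      have "part nu' (Suc k) \<le> part nu' 1" using part_mono[OF nu'(1)] by auto
      moreover have "part nu' (Suc k) = x" using k by (simp add: part_def)
      ultimately show "x \<le> m - n" using hd x by fastforce
    qed
    then have "is_partition nu" using nu'(1) False mn unfolding is_partition_def nu_def by auto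
    then show ?thesis using b nu' unfolding nu_def by auto
  qed
qed

lemma pob:
  assumes "finite S"
  shows "is_partition (partition_of_beta S) \<and> length (partition_of_beta S) \<le> card S
         \<and> beta (card S) (partition_of_beta S) = S"
  unfolding partition_of_beta_def
proof (rule theI')
  show "\<exists>!nu. is_partition nu \<and> length nu \<le> card S \<and> beta (card S) nu = S"
    using exists_beta[OF assms refl] beta_inj by metis
qed



definition Sset :: "nat list \<Rightarrow> nat list \<Rightarrow> int \<Rightarrow> int set" where
  "Sset n0 n1 k = {2*w+1 | w. w \<in> Ab n0 (-k)} \<union> {2*w | w. w \<in> Ab n1 k}"

lemma S_even: "(2*w \<in> Sset n0 n1 k) = (w \<in> Ab n1 k)"
  unfolding Sset_def by auto presburger

lemma S_odd: "(2*w+1 \<in> Sset n0 n1 k) = (w \<in> Ab n0 (-k))"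
  unfolding Sset_def by auto presburger

lemma S_inj:
  assumes "is_partition a" "is_partition b" "is_partition a'" "is_partition b'"
    "Sset a b k = Sset a' b' k'"
  shows "a = a' \<and> b = b' \<and> k = k'"
proof -
  have "Ab b k = Ab b' k'" using S_even assms(5) by blast
  then have 1: "b = b' \<and> k = k'" using Ab_inj assms by blast
  have "Ab a (-k) = Ab a' (-k')" using S_odd assms(5) by blast
  then have "a = a'" using Ab_inj assms by blast
  then show ?thesis using 1 by simp
qed

lemma Ab_shift_mem: "(z \<in> Ab nu c) = (z - c \<in> Ab nu 0)"
  unfolding Ab_aseq image_iff aseq_shift[of nu c] by (auto, metis atLeast_iff diff_add_cancel)

lemma ZB':
  assumes "length lam \<le> N"
  shows "(z \<in> Ab lam c) = (z - c < - int N \<or> (z - c \<ge> - int N \<and> nat (z - c + int N) \<in> beta N lam))"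
proof -
  have "(z \<in> Ab lam c) = (z - c \<in> (\<lambda>x. int x - int N) ` beta N lam \<union> {z. z < - int N})"
    using Ab_shift_mem[of z lam c] ZB[OF assms] by simp
  also have "\<dots> = (z - c < - int N \<or> (z - c \<ge> - int N \<and> nat (z - c + int N) \<in> beta N lam))"
  proof
    assume "z - c \<in> (\<lambda>x. int x - int N) ` beta N lam \<union> {z. z < - int N}"
    then show "z - c < - int N \<or> (z - c \<ge> - int N \<and> nat (z - c + int N) \<in> beta N lam)"
      by auto
  next
    assume h: "z - c < - int N \<or> (z - c \<ge> - int N \<and> nat (z - c + int N) \<in> beta N lam)"
    show "z - c \<in> (\<lambda>x. int x - int N) ` beta N lam \<union> {z. z < - int N}"
    proof (cases "z - c < - int N")
      case False
      then have "z - c = int (nat (z - c + int N)) - int N" by simp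
      then show ?thesis using h False by blast
    qed simp
  qed
  finally show ?thesis .
qed

lemma beta_img: "beta N lam = (\<lambda>i. part lam i + N - i) ` {1..N}"
  unfolding beta_def by auto

lemma card_beta:
  assumes "is_partition lam" "length lam \<le> N"
  shows "card (beta N lam) = N"
proof -
  have "inj_on (\<lambda>i. part lam i + N - i) {1..N}"
  proof (rule inj_onI)
    fix i j assume ij: "i \<in> {1..N}" "j \<in> {1..N}" "part lam i + N - i = part lam j + N - j"
    then have "aseq lam 0 i = aseq lam 0 j" unfolding aseq_def by auto
    then show "i = j" using aseq_inj[OF assms(1)] ij by auto
  qed
  then show ?thesis unfolding beta_img by (simp add: card_image)
qed

definition qk :: "nat list \<Rightarrow> int" where
  "qk lam = int (length lam) + 1 - int (card {x div 2 | x. x \<in> beta (2 * length lam + 1) lam \<and> even x})"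

lemma mem_E: "(y \<in> {x div 2 | x. x \<in> B \<and> even x}) = (2 * y \<in> (B::nat set))"
proof
  assume "y \<in> {x div 2 | x. x \<in> B \<and> even x}"
  then obtain x where "x \<in> B" "even x" "y = x div 2" by blast
  then show "2 * y \<in> B" by simp
next
  assume "2 * y \<in> B"
  then show "y \<in> {x div 2 | x. x \<in> B \<and> even x}" by force
qed

lemma mem_O: "(y \<in> {(x - 1) div 2 | x. x \<in> B \<and> odd x}) = (2 * y + 1 \<in> (B::nat set))"
proof
  assume "y \<in> {(x - 1) div 2 | x. x \<in> B \<and> odd x}"
  then obtain x where "x \<in> B" "odd x" "y = (x - 1) div 2" by blast
  moreover then have "2 * ((x - 1) div 2) + 1 = x" by (auto elim!: oddE)
  ultimately show "2 * y + 1 \<in> B" by simp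
next
  assume "2 * y + 1 \<in> B"
  then show "y \<in> {(x - 1) div 2 | x. x \<in> B \<and> odd x}" by force
qed

lemma card_EO:
  fixes B :: "nat set"
  assumes "finite B"
  shows "card {x div 2 | x. x \<in> B \<and> even x} + card {(x - 1) div 2 | x. x \<in> B \<and> odd x} = card B"
proof -
  define E where "E = {x div 2 | x. x \<in> B \<and> even x}"
  define Od where "Od = {(x - 1) div 2 | x. x \<in> B \<and> odd x}"
  have mE: "\<And>y. (y \<in> E) = (2 * y \<in> B)" unfolding E_def by (rule mem_E)
  have mO: "\<And>y. (y \<in> Od) = (2 * y + 1 \<in> B)" unfolding Od_def by (rule mem_O)
  have Bd: "B = (\<lambda>y. 2*y) ` E \<union> (\<lambda>y. 2*y+1) ` Od"
  proof (intro equalityI subsetI)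
    fix x assume x: "x \<in> B"
    show "x \<in> (\<lambda>y. 2*y) ` E \<union> (\<lambda>y. 2*y+1) ` Od"
    proof (cases "even x")
      case True
      then have eq: "2 * (x div 2) = x" by simp
      then have "x div 2 \<in> E" using x mE[of "x div 2"] by simp
      then have "2 * (x div 2) \<in> (\<lambda>y. 2*y) ` E" by (rule imageI)
      then show ?thesis unfolding eq by (rule UnI1)
    next
      case False
      then have eq: "2 * (x div 2) + 1 = x" by simp
      then have "x div 2 \<in> Od" using x mO[of "x div 2"] by simp
      then have "2 * (x div 2) + 1 \<in> (\<lambda>y. 2*y+1) ` Od" by (rule imageI)
      then show ?thesis unfolding eq by (rule UnI2)
    qed
  next
    fix x assume "x \<in> (\<lambda>y. 2*y) ` E \<union> (\<lambda>y. 2*y+1) ` Od"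
    then show "x \<in> B"
    proof (elim UnE imageE)
      fix y assume "y \<in> E" "x = 2 * y"
      then show "x \<in> B" using mE[of y] by simp
    next
      fix y assume "y \<in> Od" "x = 2 * y + 1"
      then show "x \<in> B" using mO[of y] by simp
    qed
  qed
  have "E \<subseteq> (\<lambda>x. x div 2) ` B" "Od \<subseteq> (\<lambda>x. (x - 1) div 2) ` B" unfolding E_def Od_def by blast+
  then have fin: "finite E" "finite Od" using assms finite_subset by blast+
  have "\<forall>a b. (2::nat) * a \<noteq> 2 * b + 1" by presburger
  then have dj: "(\<lambda>y. 2*y) ` E \<inter> (\<lambda>y. 2*y+1) ` Od = {}"
    by (auto elim!: imageE)
  have "card B = card ((\<lambda>y. 2*y) ` E) + card ((\<lambda>y. 2*y+1) ` Od)"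
    unfolding Bd by (rule card_Un_disjoint) (use fin dj in auto)
  also have "\<dots> = card E + card Od" by (simp add: card_image inj_on_def)
  finally show ?thesis unfolding E_def Od_def by simp
qed

lemma Q:
  assumes "is_partition lam"
  shows "Ab lam 0 = Sset (fst (quot2 lam)) (snd (quot2 lam)) (qk lam)"
    "is_partition (fst (quot2 lam))" "is_partition (snd (quot2 lam))"
proof -
  define L where "L = length lam"
  define N where "N = 2 * L + 1"
  define B where "B = beta N lam"
  define E where "E = {x div 2 | x. x \<in> B \<and> even x}"
  define Od where "Od = {(x - 1) div 2 | x. x \<in> B \<and> odd x}"
  have fB: "finite B" unfolding B_def beta_img by simp
  have fE: "finite E" "finite Od" unfolding E_def Od_def using fB by auto
  have cB: "card B = N" unfolding B_def using card_beta[OF assms] N_def L_def by simp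
  have cEO: "card E + card Od = N" using card_EO[OF fB] cB E_def Od_def by simp
  have q: "quot2 lam = (partition_of_beta E, partition_of_beta Od)"
    unfolding quot2_def E_def Od_def B_def N_def L_def Let_def ..
  define n0 where "n0 = partition_of_beta E"
  define n1 where "n1 = partition_of_beta Od"
  have p0: "is_partition n0" "length n0 \<le> card E" "beta (card E) n0 = E" using pob[OF fE(1)] n0_def by auto
  have p1: "is_partition n1" "length n1 \<le> card Od" "beta (card Od) n1 = Od" using pob[OF fE(2)] n1_def by auto
  have k: "qk lam = int L + 1 - int (card E)" unfolding qk_def E_def B_def N_def L_def ..
  show "is_partition (fst (quot2 lam))" "is_partition (snd (quot2 lam))"
    using q p0 p1 n0_def n1_def by auto
  have "\<forall>z. (z \<in> Ab lam 0) = (z \<in> Sset n0 n1 (qk lam))"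
  proof
    fix z :: int
    have zl: "(z \<in> Ab lam 0) = (z < - int N \<or> (z \<ge> - int N \<and> nat (z + int N) \<in> B))"
      using ZB'[of lam N z 0] L_def N_def B_def by simp
    show "(z \<in> Ab lam 0) = (z \<in> Sset n0 n1 (qk lam))"
    proof (cases "even z")
      case True
      then obtain w where w: "z = 2 * w" by (auto elim: evenE)
      have "(z \<in> Sset n0 n1 (qk lam)) = (w \<in> Ab n1 (qk lam))" using w S_even by simp
      also have "\<dots> = (w - qk lam < - int (card Od) \<or> (w - qk lam \<ge> - int (card Od) \<and>
           nat (w - qk lam + int (card Od)) \<in> Od))"
        using ZB'[OF p1(2)] p1(3) by simp
      also have "\<dots> = (w < - int L \<or> (w \<ge> - int L \<and> 2 * nat (w + int L) + 1 \<in> B))"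
      proof -
        have "int (card E) + int (card Od) = 2 * int L + 1" using arg_cong[OF cEO, of int] N_def by simp
        then have a1: "w - qk lam + int (card Od) = w + int L" using k by linarith
        have m: "(nat (w + int L) \<in> Od) = (2 * nat (w + int L) + 1 \<in> B)" unfolding Od_def by (rule mem_O)
        show ?thesis unfolding a1 m using a1 by (cases "w < - int L") auto
      qed
      also have "\<dots> = (z < - int N \<or> (z \<ge> - int N \<and> nat (z + int N) \<in> B))"
      proof (cases "w < - int L")
        case False
        then have "nat (2 * w + int (2 * L + 1)) = 2 * nat (w + int L) + 1" by (simp add: nat_eq_iff)
        then show ?thesis using False w N_def by simp
      qed (simp add: w N_def)
      also have "\<dots> = (z \<in> Ab lam 0)" using zl by simp
      finally show ?thesis by simp
    next
      case False
      then obtain w where w: "z = 2 * w + 1" by (auto elim: oddE)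
      have "(z \<in> Sset n0 n1 (qk lam)) = (w \<in> Ab n0 (- qk lam))" using w S_odd by simp
      also have "\<dots> = (w + qk lam < - int (card E) \<or> (w + qk lam \<ge> - int (card E) \<and>
           nat (w + qk lam + int (card E)) \<in> E))"
        using ZB'[OF p0(2)] p0(3) by simp
      also have "\<dots> = (w < - int L - 1 \<or> (w \<ge> - int L - 1 \<and> 2 * nat (w + int L + 1) \<in> B))"
      proof -
        have a1: "w + qk lam + int (card E) = w + int L + 1" using k by linarith
        have m: "(nat (w + int L + 1) \<in> E) = (2 * nat (w + int L + 1) \<in> B)" unfolding E_def by (rule mem_E)
        show ?thesis unfolding a1 m using a1 by (cases "w < - int L - 1") auto
      qed
      also have "\<dots> = (z < - int N \<or> (z \<ge> - int N \<and> nat (z + int N) \<in> B))"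
      proof (cases "w < - int L - 1")
        case False
        then have "nat (2 * w + 1 + int (2 * L + 1)) = 2 * nat (w + int L + 1)" by (simp add: nat_eq_iff)
        then show ?thesis using False w N_def by simp
      qed (simp add: w N_def)
      also have "\<dots> = (z \<in> Ab lam 0)" using zl by simp
      finally show ?thesis by simp
    qed
  qed
  then show "Ab lam 0 = Sset (fst (quot2 lam)) (snd (quot2 lam)) (qk lam)"
    using q n0_def n1_def by auto
qed



lemma dom_Z:
  assumes "remove_domino lam kap"
  shows "\<exists>z. z \<in> Ab lam 0 \<and> z - 2 \<notin> Ab lam 0 \<and> Ab kap 0 = insert (z - 2) (Ab lam 0 - {z})"
proof -
  obtain N x where N: "length lam \<le> N" "length kap \<le> N" and x: "x \<in> beta N lam" "2 \<le> x"
    "x - 2 \<notin> beta N lam" "beta N kap = insert (x - 2) (beta N lam - {x})"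
    using assms unfolding remove_domino_def by blast
  define z where "z = int x - int N"
  have ml: "\<And>u. (u \<in> Ab lam 0) = (u < - int N \<or> (u \<ge> - int N \<and> nat (u + int N) \<in> beta N lam))"
    using ZB'[OF N(1), of _ 0] by simp
  have mk: "\<And>u. (u \<in> Ab kap 0) = (u < - int N \<or> (u \<ge> - int N \<and> nat (u + int N) \<in> insert (x - 2) (beta N lam - {x})))"
    using ZB'[OF N(2), of _ 0] x(4) by simp
  have z1: "z \<in> Ab lam 0" using ml[of z] x z_def by simp
  have z2: "z - 2 \<notin> Ab lam 0"
  proof -
    have "nat (z - 2 + int N) = x - 2" using z_def x(2) by simp
    then show ?thesis using ml[of "z - 2"] x z_def by simp
  qed
  have "Ab kap 0 = insert (z - 2) (Ab lam 0 - {z})"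
  proof (intro set_eqI)
    fix u
    show "(u \<in> Ab kap 0) = (u \<in> insert (z - 2) (Ab lam 0 - {z}))"
    proof (cases "u < - int N")
      case True
      then show ?thesis using mk[of u] ml[of u] z_def by auto
    next
      case False
      have e1: "(nat (u + int N) = x - 2) = (u = z - 2)" using False z_def x(2) by auto
      have e2: "(nat (u + int N) = x) = (u = z)" using False z_def by auto
      show ?thesis using mk[of u] ml[of u] False e1 e2 z_def x(2) by auto
    qed
  qed
  then show ?thesis using z1 z2 by blast
qed

lemma count_move:
  fixes X :: "int set"
  assumes "Y = insert (z - 2) (X - {z})" "z \<in> X" "z - 2 \<notin> X" "z - 2 \<ge> -2 * M"
    "finite {w. 2 * w \<in> X \<and> w \<ge> -M}"
  shows "card {w. 2 * w \<in> Y \<and> w \<ge> -M} = card {w. 2 * w \<in> X \<and> w \<ge> -M}"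
proof (cases "even z")
  case False
  have "\<And>w. 2 * w \<noteq> z" "\<And>w. 2 * w \<noteq> z - 2" using False by presburger+
  then have "{w. 2 * w \<in> Y \<and> w \<ge> -M} = {w. 2 * w \<in> X \<and> w \<ge> -M}" using assms(1) by auto
  then show ?thesis by simp
next
  case True
  then obtain v where v: "z = 2 * v" by (auto elim: evenE)
  have "{w. 2 * w \<in> Y \<and> w \<ge> -M} = insert (v - 1) ({w. 2 * w \<in> X \<and> w \<ge> -M} - {v})"
    using assms(1,4) v by auto
  moreover have "v \<in> {w. 2 * w \<in> X \<and> w \<ge> -M}" using assms(2,4) v by auto
  moreover have "v - 1 \<notin> {w. 2 * w \<in> X \<and> w \<ge> -M} - {v}" using assms(3) v by auto
  ultimately show ?thesis using assms(5) card_Suc_Diff1[OF assms(5)] by simp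
qed

lemma dom_qk:
  assumes "remove_domino lam kap"
  shows "qk lam = qk kap"
proof -
  have pl: "is_partition lam" and pk: "is_partition kap" using assms unfolding remove_domino_def by auto
  obtain z where z: "z \<in> Ab lam 0" "z - 2 \<notin> Ab lam 0" "Ab kap 0 = insert (z - 2) (Ab lam 0 - {z})"
    using dom_Z[OF assms] by blast
  define b where "b = snd (quot2 lam)"
  define b' where "b' = snd (quot2 kap)"
  have Ql: "Ab lam 0 = Sset (fst (quot2 lam)) b (qk lam)" "is_partition b" using Q[OF pl] b_def by auto
  have Qk: "Ab kap 0 = Sset (fst (quot2 kap)) b' (qk kap)" "is_partition b'" using Q[OF pk] b'_def by auto
  define M where "M = int (length b) + int (length b') + \<bar>qk lam\<bar> + \<bar>qk kap\<bar> + \<bar>z\<bar> + 2"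
  have h1: "int (length b) \<le> M + qk lam" "int (length b') \<le> M + qk kap" "z - 2 \<ge> -2 * M"
    unfolding M_def by arith+
  have sl: "{w. 2 * w \<in> Ab lam 0 \<and> w \<ge> -M} = {w \<in> Ab b (qk lam). w \<ge> -M}"
    unfolding Ql(1) S_even by simp
  have sk: "{w. 2 * w \<in> Ab kap 0 \<and> w \<ge> -M} = {w \<in> Ab b' (qk kap). w \<ge> -M}"
    unfolding Qk(1) S_even by simp
  have c1: "card {w \<in> Ab b (qk lam). w \<ge> -M} = nat (M + qk lam)" "finite {w \<in> Ab b (qk lam). w \<ge> -M}"
    using Ab_cnt[OF Ql(2) h1(1)] by auto
  have c2: "card {w \<in> Ab b' (qk kap). w \<ge> -M} = nat (M + qk kap)"
    using Ab_cnt[OF Qk(2) h1(2)] by auto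
  have "card {w. 2 * w \<in> Ab kap 0 \<and> w \<ge> -M} = card {w. 2 * w \<in> Ab lam 0 \<and> w \<ge> -M}"
    by (rule count_move[OF z(3) z(1) z(2)]) (use h1 sl c1 in auto)
  then have "nat (M + qk lam) = nat (M + qk kap)" using sl sk c1 c2 by simp
  then show ?thesis using h1 by simp
qed

lemma rt_qk: "remove_domino\<^sup>*\<^sup>* lam kap \<Longrightarrow> qk lam = qk kap"
  by (induction rule: rtranclp_induct) (auto dest: dom_qk)



lemma stair_part: "is_partition (staircase t)" "length (staircase t) = t"
  unfolding is_partition_def staircase_def
  by (simp_all add: sorted_wrt_rev del: upt_Suc)

lemma stair_nth: "1 \<le> i \<Longrightarrow> i \<le> t \<Longrightarrow> part (staircase t) i = t + 1 - i"
  unfolding part_def staircase_def by (simp add: rev_nth del: upt_Suc)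

lemma stair_Ab: "(z \<in> Ab (staircase t) 0) = (z \<le> - int t - 1 \<or> (z \<le> int t - 1 \<and> even (z + int t + 1)))"
proof
  assume "z \<in> Ab (staircase t) 0"
  then obtain i where i: "1 \<le> i" "z = int (part (staircase t) i) - int i" unfolding Ab_def by auto
  show "z \<le> - int t - 1 \<or> (z \<le> int t - 1 \<and> even (z + int t + 1))"
  proof (cases "i \<le> t")
    case True
    then have "z = int t + 1 - 2 * int i" using i stair_nth by auto
    then have "z + int t + 1 = 2 * (int t + 1 - int i)" "z \<le> int t - 1" using i by auto
    then show ?thesis by simp
  next
    case False
    then have "part (staircase t) i = 0" using part_zero stair_part(2) by simp
    then show ?thesis using i False by simp
  qed
next
  assume h: "z \<le> - int t - 1 \<or> (z \<le> int t - 1 \<and> even (z + int t + 1))"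
  show "z \<in> Ab (staircase t) 0"
  proof (cases "z \<le> - int t - 1")
    case True
    then show ?thesis using Ab_tail[of z 0 "staircase t"] stair_part(2) by simp
  next
    case False
    define i where "i = nat ((int t + 1 - z) div 2)"
    have "int i = (int t + 1 - z) div 2" using False h i_def by simp
    moreover have "2 * ((int t + 1 - z) div 2) = int t + 1 - z"
    proof -
      have "even (z + int t + 1)" using h False by simp
      then obtain m where "z + int t + 1 = 2 * m" by (rule evenE)
      then have e: "int t + 1 - z = 2 * (m - z)" by simp
      show ?thesis unfolding e by simp
    qed
    ultimately have i1: "1 \<le> i" "i \<le> t" "z = int t + 1 - 2 * int i" using h False by linarith+
    then have "z = int (part (staircase t) i) - int i + 0" using stair_nth[OF i1(1,2)] by simp
    then show ?thesis using i1 unfolding Ab_def by blast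
  qed
qed

definition closed2 :: "int set \<Rightarrow> bool" where
  "closed2 X \<longleftrightarrow> (\<forall>z\<in>X. z - 2 \<in> X)"

lemma stair_closed: "closed2 (Ab (staircase t) 0)"
  unfolding closed2_def
proof
  fix z assume "z \<in> Ab (staircase t) 0"
  then have h: "z \<le> - int t - 1 \<or> (z \<le> int t - 1 \<and> even (z + int t + 1))" using stair_Ab by blast
  have "even (z - 2 + int t + 1) = even (z + int t + 1)" by (simp add: even_add)
  then have "z - 2 \<le> - int t - 1 \<or> (z - 2 \<le> int t - 1 \<and> even (z - 2 + int t + 1))" using h by auto
  then show "z - 2 \<in> Ab (staircase t) 0" using stair_Ab by blast
qed

lemma stair_nodom: "\<not> remove_domino (staircase t) k"
proof
  assume "remove_domino (staircase t) k"
  then obtain N x where N: "length (staircase t) \<le> N" and x: "x \<in> beta N (staircase t)" "2 \<le> x"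
    "x - 2 \<notin> beta N (staircase t)"
    unfolding remove_domino_def by blast
  have ml: "\<And>u. (u \<in> Ab (staircase t) 0) = (u < - int N \<or> (u \<ge> - int N \<and> nat (u + int N) \<in> beta N (staircase t)))"
    using ZB'[OF N, of _ 0] by simp
  have "int x - int N \<in> Ab (staircase t) 0" using ml[of "int x - int N"] x by simp
  then have "int x - int N - 2 \<in> Ab (staircase t) 0" using stair_closed unfolding closed2_def by blast
  moreover have "nat (int x - int N - 2 + int N) = x - 2" using x(2) by simp
  ultimately show False using ml[of "int x - int N - 2"] x by simp
qed

lemma Ab_nil: "Ab [] d = {w. w < d}"
proof (intro set_eqI iffI)
  fix w assume "w \<in> Ab [] d" then show "w \<in> {w. w < d}" unfolding Ab_def by (auto simp: part_def)
next
  fix w assume "w \<in> {w. w < d}" then show "w \<in> Ab [] d" using Ab_tail[of w d "[]"] by simp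
qed

lemma closed1_nil:
  assumes "is_partition nu" "\<forall>w\<in>Ab nu c. w - 1 \<in> Ab nu c"
  shows "nu = []"
proof -
  define a where "a = aseq nu c 1"
  have aA: "a \<in> Ab nu c" unfolding a_def Ab_aseq by auto
  have down: "\<And>n. a - int n \<in> Ab nu c"
  proof -
    fix n show "a - int n \<in> Ab nu c"
    proof (induction n)
      case 0 then show ?case using aA by simp
    next
      case (Suc n)
      then have "a - int n - 1 \<in> Ab nu c" using assms(2) by blast
      then show ?case by (simp add: algebra_simps)
    qed
  qed
  have "Ab nu c = {w. w < a + 1}"
  proof (intro set_eqI iffI)
    fix w assume "w \<in> Ab nu c"
    then obtain i where "i \<ge> 1" "w = aseq nu c i" unfolding Ab_aseq by auto
    then have "w \<le> a" using aseq_le[OF assms(1), of 1 i c] a_def by simp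
    then show "w \<in> {w. w < a + 1}" by simp
  next
    fix w assume "w \<in> {w. w < a + 1}"
    then have "w = a - int (nat (a - w))" by simp
    then show "w \<in> Ab nu c" using down by metis
  qed
  then have "Ab nu c = Ab [] (a + 1)" using Ab_nil by simp
  moreover have "is_partition []" by (simp add: is_partition_def)
  ultimately show ?thesis using Ab_inj assms(1) by blast
qed

lemma closed_S:
  assumes "is_partition lam" "closed2 (Ab lam 0)"
  shows "Ab lam 0 = Sset [] [] (qk lam)"
proof -
  define a where "a = fst (quot2 lam)"
  define b where "b = snd (quot2 lam)"
  have q: "Ab lam 0 = Sset a b (qk lam)" "is_partition a" "is_partition b" using Q[OF assms(1)] a_def b_def by auto
  have "\<forall>w\<in>Ab b (qk lam). w - 1 \<in> Ab b (qk lam)"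
  proof
    fix w assume "w \<in> Ab b (qk lam)"
    then have "2 * w \<in> Ab lam 0" using q(1) S_even by simp
    then have "2 * w - 2 \<in> Ab lam 0" using assms(2) unfolding closed2_def by blast
    moreover have "2 * w - 2 = 2 * (w - 1)" by simp
    ultimately show "w - 1 \<in> Ab b (qk lam)" using q(1) S_even by metis
  qed
  then have "b = []" using closed1_nil q(3) by blast
  have "\<forall>w\<in>Ab a (- qk lam). w - 1 \<in> Ab a (- qk lam)"
  proof
    fix w assume "w \<in> Ab a (- qk lam)"
    then have "2 * w + 1 \<in> Ab lam 0" using q(1) S_odd by simp
    then have "2 * w + 1 - 2 \<in> Ab lam 0" using assms(2) unfolding closed2_def by blast
    moreover have "2 * w + 1 - 2 = 2 * (w - 1) + 1" by simp
    ultimately show "w - 1 \<in> Ab a (- qk lam)" using q(1) S_odd by metis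
  qed
  then have "a = []" using closed1_nil q(2) by blast
  then show ?thesis using q(1) \<open>b = []\<close> by simp
qed

definition kt :: "nat \<Rightarrow> int" where
  "kt t = (if even t then - int (t div 2) else int ((t + 1) div 2))"

lemma S_nil_mem: "(z \<in> Sset [] [] k) = ((even z \<and> z div 2 < k) \<or> (odd z \<and> (z - 1) div 2 < - k))"
proof (cases "even z")
  case True
  then obtain w where "z = 2 * w" by (auto elim: evenE)
  then show ?thesis using S_even[of w "[]" "[]" k] Ab_nil by simp
next
  case False
  then obtain w where "z = 2 * w + 1" by (auto elim: oddE)
  then show ?thesis using S_odd[of w "[]" "[]" k] Ab_nil by simp
qed

lemma SS: assumes T0: "(T::int) \<ge> 0" shows "(z \<le> - T - 1 \<or> (z \<le> T - 1 \<and> even (z + T + 1))) =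
   ((even z \<and> z div 2 < (if even T then - (T div 2) else (T + 1) div 2)) \<or> (odd z \<and> (z - 1) div 2 < - (if even T then - (T div 2) else (T + 1) div 2)))"
proof (cases "even T")
  case True
  then obtain s where s: "T = 2 * s" by (auto elim: evenE)
  show ?thesis
  proof (cases "even z")
    case True
    then obtain w where w: "z = 2 * w" by (auto elim: evenE)
    show ?thesis using T0 unfolding s w by (auto simp: even_add)
  next
    case False
    then obtain w where w: "z = 2 * w + 1" by (auto elim: oddE)
    show ?thesis using T0 unfolding s w by (auto simp: even_add)
  qed
next
  case False
  then obtain s where s: "T = 2 * s + 1" by (auto elim: oddE)
  show ?thesis
  proof (cases "even z")
    case True
    then obtain w where w: "z = 2 * w" by (auto elim: evenE)
    show ?thesis using T0 unfolding s w by (auto simp: even_add)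
  next
    case False
    then obtain w where w: "z = 2 * w + 1" by (auto elim: oddE)
    show ?thesis using T0 unfolding s w by (auto simp: even_add)
  qed
qed
lemma kt_int: "kt t = (if even (int t) then - (int t div 2) else (int t + 1) div 2)"
  unfolding kt_def by (simp add: zdiv_int)

lemma stair_S: "Ab (staircase t) 0 = Sset [] [] (kt t)"
proof (intro set_eqI)
  fix z
  show "(z \<in> Ab (staircase t) 0) = (z \<in> Sset [] [] (kt t))"
    unfolding stair_Ab S_nil_mem kt_int by (rule SS) simp
qed

lemma stair_qk: "qk (staircase t) = kt t"
proof -
  have "Ab (staircase t) 0 = Sset [] [] (qk (staircase t))"
    using closed_S stair_part stair_closed by blast
  then have "Sset [] [] (qk (staircase t)) = Sset [] [] (kt t)" using stair_S by simp
  moreover have "is_partition []" by (simp add: is_partition_def)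
  ultimately show ?thesis using S_inj by blast
qed



lemma chain:
  assumes "is_partition lam" "length lam \<le> N" "t \<le> N" "qk lam = kt t"
  shows "remove_domino\<^sup>*\<^sup>* lam (staircase t)"
  using assms
proof (induction "sum id (beta N lam)" arbitrary: lam rule: less_induct)
  case less
  have fB: "finite (beta N lam)" by (simp add: beta_img)
  show ?case
  proof (cases "\<exists>x\<in>beta N lam. 2 \<le> x \<and> x - 2 \<notin> beta N lam")
    case True
    then obtain x where x: "x \<in> beta N lam" "2 \<le> x" "x - 2 \<notin> beta N lam" by blast
    define B' where "B' = insert (x - 2) (beta N lam - {x})"
    have cB: "card (beta N lam) = N" using card_beta[OF less.prems(1,2)] .
    have "card (beta N lam - {x}) = N - 1" using cB x(1) fB by simp
    moreover have "N \<ge> 1" using cB x(1) fB by (metis card_0_eq empty_iff less_one not_le)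
    ultimately have cB': "card B' = N" using x fB unfolding B'_def by simp
    obtain kap where k: "is_partition kap" "length kap \<le> N" "beta N kap = B'"
      using exists_beta[OF _ cB'] fB unfolding B'_def by blast
    have rd: "remove_domino lam kap" unfolding remove_domino_def
      using less.prems(1,2) k x B'_def by blast
    have qkk: "qk kap = kt t" using dom_qk[OF rd] less.prems(4) by simp
    have s1: "sum id (beta N lam) = x + sum id (beta N lam - {x})" using sum.remove[OF fB x(1)] by simp
    have s2: "sum id B' = (x - 2) + sum id (beta N lam - {x})" unfolding B'_def using fB x(3) by simp
    have "sum id (beta N kap) < sum id (beta N lam)" using s1 s2 k(3) x(2) by simp
    then have "remove_domino\<^sup>*\<^sup>* kap (staircase t)" using less.hyps k(1,2) less.prems(3) qkk by blast
    then show ?thesis by (rule converse_rtranclp_into_rtranclp[of remove_domino lam kap, OF rd])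
  next
    case False
    have ml: "\<And>u. (u \<in> Ab lam 0) = (u < - int N \<or> (u \<ge> - int N \<and> nat (u + int N) \<in> beta N lam))"
      using ZB'[OF less.prems(2), of _ 0] by simp
    have "closed2 (Ab lam 0)" unfolding closed2_def
    proof
      fix z assume z: "z \<in> Ab lam 0"
      show "z - 2 \<in> Ab lam 0"
      proof (cases "z - 2 < - int N")
        case True then show ?thesis using ml by simp
      next
        case nl: False
        then have "nat (z + int N) \<in> beta N lam" "2 \<le> nat (z + int N)" using z ml by auto
        then have "nat (z + int N) - 2 \<in> beta N lam" using False by blast
        moreover have "nat (z + int N) - 2 = nat (z - 2 + int N)" using nl by simp
        ultimately show ?thesis using ml nl by simp
      qed
    qed
    then have "Ab lam 0 = Sset [] [] (qk lam)" using closed_S less.prems(1) by blast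
    then have "Ab lam 0 = Ab (staircase t) 0" using stair_S less.prems(4) by simp
    then have "lam = staircase t" using Ab_inj less.prems(1) stair_part(1) by blast
    then show ?thesis by simp
  qed
qed

lemma exists_S:
  assumes "is_partition a" "is_partition b"
  shows "\<exists>lam. is_partition lam \<and> Ab lam 0 = Sset a b k"
proof -
  define M :: nat where "M = length a + length b + nat \<bar>k\<bar>"
  define N where "N = 2 * M"
  define T where "T = {z \<in> Sset a b k. z \<ge> - int N}"
  define Ta where "Ta = {w \<in> Ab a (-k). w \<ge> - int M}"
  define Tb where "Tb = {w \<in> Ab b k. w \<ge> - int M}"
  have hA: "int (length a) \<le> int M + (-k)" "int (length b) \<le> int M + k" unfolding M_def by arith+
  have ca: "card Ta = nat (int M - k)" "finite Ta" using Ab_cnt[OF assms(1) hA(1)] Ta_def by auto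
  have cb: "card Tb = nat (int M + k)" "finite Tb" using Ab_cnt[OF assms(2) hA(2)] Tb_def by auto
  have Td: "T = (\<lambda>w. 2 * w + 1) ` Ta \<union> (\<lambda>w. 2 * w) ` Tb"
  proof (intro set_eqI iffI)
    fix z assume z: "z \<in> T"
    show "z \<in> (\<lambda>w. 2 * w + 1) ` Ta \<union> (\<lambda>w. 2 * w) ` Tb"
    proof (cases "even z")
      case True
      then obtain w where w: "z = 2 * w" by (auto elim: evenE)
      then have "w \<in> Tb" using z S_even unfolding T_def Tb_def N_def by auto
      then show ?thesis using w by blast
    next
      case False
      then obtain w where w: "z = 2 * w + 1" by (auto elim: oddE)
      then have "w \<in> Ta" using z S_odd unfolding T_def Ta_def N_def by auto
      then show ?thesis using w by blast
    qed
  next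
    fix z assume "z \<in> (\<lambda>w. 2 * w + 1) ` Ta \<union> (\<lambda>w. 2 * w) ` Tb"
    then show "z \<in> T"
    proof (elim UnE imageE)
      fix w assume "w \<in> Ta" "z = 2 * w + 1"
      then show "z \<in> T" using S_odd unfolding T_def Ta_def N_def by auto
    next
      fix w assume "w \<in> Tb" "z = 2 * w"
      then show "z \<in> T" using S_even unfolding T_def Tb_def N_def by auto
    qed
  qed
  have "\<forall>u v. (2::int) * u + 1 \<noteq> 2 * v" by presburger
  then have dj: "(\<lambda>w. 2 * w + 1) ` Ta \<inter> (\<lambda>w. 2 * w) ` Tb = {}" by (auto elim!: imageE)
  have "card T = card ((\<lambda>w. 2 * w + 1) ` Ta) + card ((\<lambda>w. (2::int) * w) ` Tb)"
    unfolding Td by (rule card_Un_disjoint) (use ca cb dj in auto)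
  also have "\<dots> = card Ta + card Tb" by (simp add: card_image inj_on_def)
  also have "\<dots> = N" using ca cb hA unfolding N_def by simp
  finally have cT: "card T = N" .
  have fT: "finite T" using Td ca cb by simp
  define B where "B = (\<lambda>z. nat (z + int N)) ` T"
  have inj: "inj_on (\<lambda>z. nat (z + int N)) T" unfolding T_def inj_on_def by (auto simp: eq_nat_nat_iff)
  have cB: "card B = N" "finite B" unfolding B_def using card_image[OF inj] cT fT by auto
  obtain lam where lam: "is_partition lam" "length lam \<le> N" "beta N lam = B"
    using exists_beta[OF cB(2) cB(1)] by blast
  have "Ab lam 0 = Sset a b k"
  proof (intro set_eqI)
    fix z
    have ml: "(z \<in> Ab lam 0) = (z < - int N \<or> (z \<ge> - int N \<and> nat (z + int N) \<in> B))"
      using ZB'[OF lam(2), of z 0] lam(3) by simp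
    show "(z \<in> Ab lam 0) = (z \<in> Sset a b k)"
    proof (cases "z < - int N")
      case True
      have "z \<in> Sset a b k"
      proof (cases "even z")
        case True
        then obtain w where w: "z = 2 * w" by (auto elim: evenE)
        have "w < k - int (length b)" using \<open>z < - int N\<close> w hA unfolding N_def by simp
        then show ?thesis using w S_even Ab_tail by blast
      next
        case False
        then obtain w where w: "z = 2 * w + 1" by (auto elim: oddE)
        have "w < - k - int (length a)" using \<open>z < - int N\<close> w hA unfolding N_def by simp
        then show ?thesis using w S_odd Ab_tail by blast
      qed
      then show ?thesis using ml True by simp
    next
      case False
      have "(nat (z + int N) \<in> B) = (z \<in> T)"
      proof
        assume "nat (z + int N) \<in> B"
        then obtain z' where z': "z' \<in> T" "nat (z' + int N) = nat (z + int N)" unfolding B_def image_iff by metis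
        then have "z' = z" using False unfolding T_def by (auto simp: eq_nat_nat_iff)
        then show "z \<in> T" using z' by simp
      qed (simp add: B_def)
      then show ?thesis using ml False unfolding T_def by simp
    qed
  qed
  then show ?thesis using lam(1) by blast
qed



lemma S_mem: "(z \<in> Sset n0 n1 k) = ((even z \<and> z div 2 - k \<in> Ab n1 0) \<or> (odd z \<and> (z - 1) div 2 + k \<in> Ab n0 0))"
proof (cases "even z")
  case True
  then obtain w where "z = 2 * w" by (auto elim: evenE)
  then show ?thesis using S_even[of w n0 n1 k] Ab_shift_mem[of w n1 k] by simp
next
  case False
  then obtain w where "z = 2 * w + 1" by (auto elim: oddE)
  then show ?thesis using S_odd[of w n0 n1 k] Ab_shift_mem[of w n0 "-k"] by simp
qed

lemma symbol_Ab: "symbol_comp nu c = Ab nu (c + 1)"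
  unfolding symbol_comp_def Ab_def by (simp add: add.assoc)

lemma A_mem:
  assumes "odd e"
  shows "(z \<in> abacus_e e mu (c1, c2)) =
    ((odd z \<and> (z - e) div 2 - c1 - 1 \<in> Ab (fst mu) 0) \<or> (even z \<and> z div 2 - c2 - 1 \<in> Ab (snd mu) 0))"
proof -
  have "(z \<in> abacus_e e mu (c1, c2)) =
     ((\<exists>j. j \<in> Ab (fst mu) (c1 + 1) \<and> z = 2 * j + e) \<or> (\<exists>j. j \<in> Ab (snd mu) (c2 + 1) \<and> z = 2 * j))"
    unfolding abacus_e_def symbol_def symbol_Ab by auto
  also have "\<dots> = ((odd z \<and> (z - e) div 2 \<in> Ab (fst mu) (c1 + 1)) \<or> (even z \<and> z div 2 \<in> Ab (snd mu) (c2 + 1)))"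
  proof -
    obtain f where f: "e = 2 * f + 1" using assms by (auto elim: oddE)
    have 1: "(\<exists>j. j \<in> Ab (fst mu) (c1 + 1) \<and> z = 2 * j + e) = (odd z \<and> (z - e) div 2 \<in> Ab (fst mu) (c1 + 1))"
    proof
      assume "\<exists>j. j \<in> Ab (fst mu) (c1 + 1) \<and> z = 2 * j + e"
      then obtain j where j: "j \<in> Ab (fst mu) (c1 + 1)" "z = 2 * j + e" by blast
      then have "z - e = 2 * j" "odd z" using f by auto
      then show "odd z \<and> (z - e) div 2 \<in> Ab (fst mu) (c1 + 1)" using j by simp
    next
      assume h: "odd z \<and> (z - e) div 2 \<in> Ab (fst mu) (c1 + 1)"
      then obtain w where w: "z = 2 * w + 1" by (auto elim: oddE)
      then have "z - e = 2 * (w - f)" using f by simp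
      then have "z = 2 * ((z - e) div 2) + e" using f w by simp
      then show "\<exists>j. j \<in> Ab (fst mu) (c1 + 1) \<and> z = 2 * j + e" using h by blast
    qed
    have 2: "(\<exists>j. j \<in> Ab (snd mu) (c2 + 1) \<and> z = 2 * j) = (even z \<and> z div 2 \<in> Ab (snd mu) (c2 + 1))"
      by (auto elim: evenE)
    show ?thesis using 1 2 by simp
  qed
  also have "\<dots> = ((odd z \<and> (z - e) div 2 - c1 - 1 \<in> Ab (fst mu) 0) \<or> (even z \<and> z div 2 - c2 - 1 \<in> Ab (snd mu) 0))"
    using Ab_shift_mem[of "(z - e) div 2" "fst mu" "c1 + 1"] Ab_shift_mem[of "z div 2" "snd mu" "c2 + 1"]
    by (simp add: algebra_simps)
  finally show ?thesis .
qed

definition nn :: "nat \<Rightarrow> nat list \<times> nat list \<Rightarrow> nat list \<times> nat list" where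
  "nn t mu = (if even t then mu else prod.swap mu)"

lemma P_iff:
  assumes "is_bipartition mu" "is_partition lam"
  shows "(has_2core lam (staircase t) \<and> quot2_bar t lam = mu) =
         (Ab lam 0 = Sset (fst (nn t mu)) (snd (nn t mu)) (kt t))"
proof
  assume h: "has_2core lam (staircase t) \<and> quot2_bar t lam = mu"
  then have "qk lam = kt t" using rt_qk stair_qk unfolding has_2core_def by metis
  moreover have "quot2 lam = nn t mu" using h unfolding quot2_bar_def nn_def
    by (cases "even t") auto
  ultimately show "Ab lam 0 = Sset (fst (nn t mu)) (snd (nn t mu)) (kt t)" using Q(1)[OF assms(2)] by simp
next
  assume h: "Ab lam 0 = Sset (fst (nn t mu)) (snd (nn t mu)) (kt t)"
  have pn: "is_partition (fst (nn t mu))" "is_partition (snd (nn t mu))"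
    using assms(1) unfolding is_bipartition_def nn_def by auto
  have "fst (quot2 lam) = fst (nn t mu) \<and> snd (quot2 lam) = snd (nn t mu) \<and> qk lam = kt t"
  proof -
    have "Sset (fst (quot2 lam)) (snd (quot2 lam)) (qk lam) = Sset (fst (nn t mu)) (snd (nn t mu)) (kt t)"
      using Q(1)[OF assms(2)] h by simp
    then show ?thesis using S_inj[OF Q(2,3)[OF assms(2)] pn] by blast
  qed
  then have q: "quot2 lam = nn t mu" "qk lam = kt t" by (auto simp: prod_eq_iff)
  have "quot2_bar t lam = mu" using q(1) unfolding quot2_bar_def nn_def by (cases "even t") auto
  moreover have "remove_domino\<^sup>*\<^sup>* lam (staircase t)"
    using chain[OF assms(2) _ _ q(2), of "max (length lam) t"] by simp
  ultimately show "has_2core lam (staircase t) \<and> quot2_bar t lam = mu"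
    unfolding has_2core_def using stair_nodom by blast
qed

lemma Phi_Ab:
  assumes "is_bipartition mu"
  shows "is_partition (Phi t mu) \<and> Ab (Phi t mu) 0 = Sset (fst (nn t mu)) (snd (nn t mu)) (kt t)"
proof -
  have pn: "is_partition (fst (nn t mu))" "is_partition (snd (nn t mu))"
    using assms unfolding is_bipartition_def nn_def by auto
  have ex: "\<exists>!lam. is_partition lam \<and> has_2core lam (staircase t) \<and> quot2_bar t lam = mu"
  proof -
    obtain lam where lam: "is_partition lam" "Ab lam 0 = Sset (fst (nn t mu)) (snd (nn t mu)) (kt t)"
      using exists_S[OF pn] by blast
    have "is_partition lam \<and> has_2core lam (staircase t) \<and> quot2_bar t lam = mu"
      using P_iff[OF assms lam(1)] lam by simp
    moreover have "\<And>l. is_partition l \<and> has_2core l (staircase t) \<and> quot2_bar t l = mu \<Longrightarrow> l = lam"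
    proof -
      fix l assume "is_partition l \<and> has_2core l (staircase t) \<and> quot2_bar t l = mu"
      then have "is_partition l" "Ab l 0 = Ab lam 0" using P_iff[OF assms] lam by auto
      then show "l = lam" using Ab_inj lam(1) by blast
    qed
    ultimately show ?thesis by blast
  qed
  have "is_partition (Phi t mu) \<and> has_2core (Phi t mu) (staircase t) \<and> quot2_bar t (Phi t mu) = mu"
    unfolding Phi_def by (rule theI'[OF ex])
  then show ?thesis using P_iff[OF assms] by blast
qed

theorem lemma7p2:
  fixes e :: int and t :: nat and mu :: "nat list \<times> nat list"
  assumes "e > 1" and "odd e" and "is_bipartition mu"
  shows "\<forall>j\<ge>1. abacus_part (abacus_e e mu (int t + (1 - e) div 2, 0)) j = part (Phi t mu) j"
proof -
  define lam where "lam = Phi t mu"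
  have pl: "is_partition lam" "Ab lam 0 = Sset (fst (nn t mu)) (snd (nn t mu)) (kt t)"
    using Phi_Ab[OF assms(3)] lam_def by auto
  obtain f where f: "e = 2 * f + 1" using assms(2) by (auto elim: oddE)
  have "abacus_e e mu (int t + (1 - e) div 2, 0) = Ab lam (int t + 2)"
  proof (intro set_eqI)
    fix z
    have r: "(z \<in> Ab lam (int t + 2)) = (z - (int t + 2) \<in> Sset (fst (nn t mu)) (snd (nn t mu)) (kt t))"
      using Ab_shift_mem[of z lam "int t + 2"] pl(2) by simp
    show "(z \<in> abacus_e e mu (int t + (1 - e) div 2, 0)) = (z \<in> Ab lam (int t + 2))"
      unfolding r A_mem[OF assms(2)] S_mem
    proof (cases "even t")
      case True
      then obtain s where s: "t = 2 * s" by (auto elim: evenE)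
      have n: "nn t mu = mu" "kt t = - int s" unfolding nn_def kt_def using True s by auto
      show "((odd z \<and> (z - e) div 2 - (int t + (1 - e) div 2) - 1 \<in> Ab (fst mu) 0) \<or> (even z \<and> z div 2 - 0 - 1 \<in> Ab (snd mu) 0)) =
        ((even (z - (int t + 2)) \<and> (z - (int t + 2)) div 2 - kt t \<in> Ab (snd (nn t mu)) 0) \<or>
         (odd (z - (int t + 2)) \<and> (z - (int t + 2) - 1) div 2 + kt t \<in> Ab (fst (nn t mu)) 0))"
      proof (cases "even z")
        case True
        then obtain w where w: "z = 2 * w" by (auto elim: evenE)
        have "z - (int t + 2) = 2 * (w - int s - 1)" using w s by simp
        then show ?thesis unfolding n using w by simp
      next
        case False
        then obtain w where w: "z = 2 * w + 1" by (auto elim: oddE)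
        have a: "z - (int t + 2) = 2 * (w - int s - 1) + 1" using w s by simp
        have b: "z - e = 2 * (w - f)" using w f by simp
        have c: "(1 - e) div 2 = - f"
        proof -
          have "1 - e = 2 * (- f)" using f by simp
          then show ?thesis by (metis nonzero_mult_div_cancel_left zero_neq_numeral)
        qed
        show ?thesis unfolding n a b c using w s by (simp add: algebra_simps)
      qed
    next
      case False
      then obtain s where s: "t = 2 * s + 1" by (auto elim: oddE)
      have n: "nn t mu = prod.swap mu" "kt t = int s + 1" unfolding nn_def kt_def using False s by auto
      show "((odd z \<and> (z - e) div 2 - (int t + (1 - e) div 2) - 1 \<in> Ab (fst mu) 0) \<or> (even z \<and> z div 2 - 0 - 1 \<in> Ab (snd mu) 0)) =
        ((even (z - (int t + 2)) \<and> (z - (int t + 2)) div 2 - kt t \<in> Ab (snd (nn t mu)) 0) \<or>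
         (odd (z - (int t + 2)) \<and> (z - (int t + 2) - 1) div 2 + kt t \<in> Ab (fst (nn t mu)) 0))"
      proof (cases "even z")
        case True
        then obtain w where w: "z = 2 * w" by (auto elim: evenE)
        have a: "z - (int t + 2) = 2 * (w - int s - 2) + 1" using w s by simp
        show ?thesis unfolding n a using w by simp
      next
        case False
        then obtain w where w: "z = 2 * w + 1" by (auto elim: oddE)
        have a: "z - (int t + 2) = 2 * (w - int s - 1)" using w s by simp
        have b: "z - e = 2 * (w - f)" using w f by simp
        have c: "(1 - e) div 2 = - f"
        proof -
          have "1 - e = 2 * (- f)" using f by simp
          then show ?thesis by (metis nonzero_mult_div_cancel_left zero_neq_numeral)
        qed
        show ?thesis unfolding n a b c using w s by (simp add: algebra_simps)
      qed
    qed
  qed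
  then show ?thesis using abacus_part_Ab[OF pl(1)] lam_def by simp
qed

end
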